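(* Let $G$ be a $2$-connected finite simple graph. Then $\mathrm{nRel}(G;p)$ is concave down for $p\in(0,1)$ sufficiently close to $1$; that is, there is $\varepsilon>0$ such that $\frac{d^2}{dp^2}\mathrm{nRel}(G;p)<0$ for all $p\in(1-\varepsilon,1)$.
   Context: For a graph $G$ on $n$ vertices, a connected set is a nonempty vertex subset $C$ such that the induced subgraph $G[C]$ is connected. The node reliability of $G$ is the polynomial \[ \mathrm{nRel}(G;p)=\sum_{C}p^{|C|}(1-p)^{n-|C|}, \] the sum over all connected sets $C$ of $G$. *)

theory Defs
  imports "HOL-Analysis.Analysis"
begin

definition simple_graph :: "'a set \<Rightarrow> ('a \<Rightarrow> 'a \<Rightarrow> bool) \<Rightarrow> bool" where
  "simple_graph V E \<longleftrightarrow> finite V \<and> (\<forall>x y. E x y \<longrightarrow> x \<in> V \<and> y \<in> V)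
     \<and> (\<forall>x y. E x y \<longrightarrow> E y x) \<and> (\<forall>x. \<not> E x x)"

definition connected_set :: "'a set \<Rightarrow> ('a \<Rightarrow> 'a \<Rightarrow> bool) \<Rightarrow> 'a set \<Rightarrow> bool" where
  "connected_set V E C \<longleftrightarrow> C \<noteq> {} \<and> C \<subseteq> V \<and>
     (\<forall>x\<in>C. \<forall>y\<in>C. (\<lambda>a b. E a b \<and> a \<in> C \<and> b \<in> C)\<^sup>*\<^sup>* x y)"

definition two_connected :: "'a set \<Rightarrow> ('a \<Rightarrow> 'a \<Rightarrow> bool) \<Rightarrow> bool" where
  "two_connected V E \<longleftrightarrow> card V \<ge> 3 \<and> connected_set V E V \<and>
     (\<forall>v\<in>V. connected_set V E (V - {v}))"

definition nRel :: "'a set \<Rightarrow> ('a \<Rightarrow> 'a \<Rightarrow> bool) \<Rightarrow> real \<Rightarrow> real" where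
  "nRel V E p = (\<Sum>C\<in>{C. connected_set V E C}. p ^ card C * (1 - p) ^ (card V - card C))"

end

theory Submission
  imports Defs
begin

definition tt :: "nat \<Rightarrow> nat \<Rightarrow> real \<Rightarrow> real" where
  "tt a b p = p ^ a * (1 - p) ^ b"

definition d1 :: "nat \<Rightarrow> nat \<Rightarrow> real \<Rightarrow> real" where
  "d1 a b p = real a * p ^ (a - 1) * (1 - p) ^ b - real b * p ^ a * (1 - p) ^ (b - 1)"

definition d2 :: "nat \<Rightarrow> nat \<Rightarrow> real \<Rightarrow> real" where
  "d2 a b p = real a * (real (a - 1) * p ^ (a - 2) * (1 - p) ^ b - real b * p ^ (a - 1) * (1 - p) ^ (b - 1))
     - real b * (real a * p ^ (a - 1) * (1 - p) ^ (b - 1) - real (b - 1) * p ^ a * (1 - p) ^ (b - 2))"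

lemma pow_deriv: "((\<lambda>p::real. p ^ a) has_real_derivative real a * p ^ (a - 1)) (at p)"
  using DERIV_pow[of a p UNIV] by simp

lemma pow1_deriv: "((\<lambda>p::real. (1 - p) ^ b) has_real_derivative - (real b * (1 - p) ^ (b - 1))) (at p)"
proof -
  have "((\<lambda>p::real. 1 - p) has_real_derivative 0 - 1) (at p)"
    by (intro DERIV_diff DERIV_const DERIV_ident)
  from DERIV_power[OF this, of b] show ?thesis by (simp add: algebra_simps)
qed

lemma tt_deriv: "(tt a b has_real_derivative d1 a b p) (at p)"
proof -
  have "((\<lambda>p. p ^ a * (1 - p) ^ b) has_real_derivative
     p ^ a * (- (real b * (1 - p) ^ (b - 1))) + (real a * p ^ (a - 1)) * (1 - p) ^ b) (at p)"
    by (rule DERIV_mult'[OF pow_deriv pow1_deriv])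
  then show ?thesis unfolding tt_def d1_def by (simp add: algebra_simps)
qed

lemma d1_deriv: "(d1 a b has_real_derivative d2 a b p) (at p)"
proof -
  have A: "((\<lambda>p. p ^ (a-1) * (1 - p) ^ b) has_real_derivative
     p ^ (a-1) * (- (real b * (1 - p) ^ (b - 1))) + (real (a-1) * p ^ (a - 1 - 1)) * (1 - p) ^ b) (at p)"
    by (rule DERIV_mult'[OF pow_deriv pow1_deriv])
  have B: "((\<lambda>p. p ^ a * (1 - p) ^ (b-1)) has_real_derivative
     p ^ a * (- (real (b-1) * (1 - p) ^ (b - 1 - 1))) + (real a * p ^ (a - 1)) * (1 - p) ^ (b-1)) (at p)"
    by (rule DERIV_mult'[OF pow_deriv pow1_deriv])
  have "((\<lambda>p. real a * (p ^ (a-1) * (1 - p) ^ b) - real b * (p ^ a * (1 - p) ^ (b-1))) has_real_derivative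
     real a * (p ^ (a-1) * (- (real b * (1 - p) ^ (b - 1))) + (real (a-1) * p ^ (a - 1 - 1)) * (1 - p) ^ b)
     - real b * (p ^ a * (- (real (b-1) * (1 - p) ^ (b - 1 - 1))) + (real a * p ^ (a - 1)) * (1 - p) ^ (b-1))) (at p)"
    by (intro DERIV_diff DERIV_cmult A B)
  moreover have "(\<lambda>p. real a * (p ^ (a-1) * (1 - p) ^ b) - real b * (p ^ a * (1 - p) ^ (b-1))) = d1 a b"
    by (rule ext) (simp add: d1_def algebra_simps)
  ultimately show ?thesis unfolding d2_def by (simp add: algebra_simps diff_diff_eq numeral_2_eq_2)
qed

lemma d2_neg_pos:
  fixes a b n :: nat and p :: real
  assumes "2 \<le> b" "a \<le> n" "0 < p" "p < 1" "(1 - p) * (3 * real n) < 1"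
  shows "d2 a b p > 0"
proof -
  define q where "q = 1 - p"
  have q0: "0 < q" "q < 1" using assms q_def by auto
  have qb: "q ^ b = q ^ (b-2) * q ^ 2" "q ^ (b-1) = q ^ (b-2) * q"
  proof -
    obtain c where "b = c + 2" using assms(1) by (metis le_add_diff_inverse2)
    then show "q ^ b = q ^ (b-2) * q ^ 2" "q ^ (b-1) = q ^ (b-2) * q" by (simp_all add: power_add power2_eq_square)
  qed
  have eq: "d2 a b p = q ^ (b-2) * (real a * real (a-1) * p ^ (a-2) * q^2
      - 2 * real a * real b * p ^ (a-1) * q + real b * real (b-1) * p ^ a)"
    unfolding d2_def q_def[symmetric] qb by (simp add: algebra_simps)
  have key: "2 * real a * real b * p ^ (a-1) * q < real b * real (b-1) * p ^ a"
  proof (cases "a = 0")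
    case True
    then show ?thesis using assms by simp
  next
    case False
    have pa: "p ^ a = p ^ (a-1) * p" using False by (metis power_minus_mult neq0_conv)
    have b1: "real (b-1) \<ge> 1" using assms by simp
    have "2 * real a * q \<le> 2 * real n * q" using assms q0 by simp
    also have "\<dots> < p"
    proof (cases "n = 0")
      case True
      then show ?thesis using q0 q_def by simp
    next
      case False
      then have h1: "q * 1 \<le> q * real n" using q0 by (intro mult_left_mono) auto
      have h2: "q * (3 * real n) < 1" using assms(5) q_def by simp
      have e1: "q * (3 * real n) = 3 * (q * real n)" "2 * real n * q = 2 * (q * real n)" by simp_all
      show ?thesis using h1 h2 e1 q_def by linarith
    qed
    also have "\<dots> \<le> real (b-1) * p" using b1 assms by simp
    finally have "2 * real a * q < real (b-1) * p" .
    moreover have "real b * p ^ (a-1) > 0" using assms by simp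
    ultimately have "(real b * p ^ (a-1)) * (2 * real a * q) < (real b * p ^ (a-1)) * (real (b-1) * p)"
      by (rule mult_strict_left_mono)
    then show ?thesis unfolding pa by (simp add: algebra_simps)
  qed
  have "0 \<le> real a * real (a-1) * p ^ (a-2) * q^2" using assms q0 by simp
  with key have "0 < real a * real (a-1) * p ^ (a-2) * q^2
      - 2 * real a * real b * p ^ (a-1) * q + real b * real (b-1) * p ^ a" by linarith
  then show ?thesis unfolding eq using q0 by simp
qed

theorem lemma3p3:
  fixes V :: "'a set" and E :: "'a \<Rightarrow> 'a \<Rightarrow> bool"
  assumes "simple_graph V E" and "two_connected V E"
  shows "\<exists>\<epsilon>>0. \<forall>p. 1 - \<epsilon> < p \<and> p < 1 \<longrightarrow> deriv (deriv (nRel V E)) p < 0"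
proof -
  define n where "n = card V"
  have fin: "finite V" using assms(1) unfolding simple_graph_def by simp
  have n3: "n \<ge> 3" using assms(2) unfolding two_connected_def n_def by simp
  define NC where "NC = {S \<in> Pow V. \<not> connected_set V E S}"
  define CS where "CS = {C. connected_set V E C}"
  have CSsub: "CS \<subseteq> Pow V" unfolding CS_def connected_set_def by auto
  have finP: "finite (Pow V)" using fin by simp
  have finNC: "finite NC" unfolding NC_def using finP by simp
  have PowU: "Pow V = CS \<union> NC" "CS \<inter> NC = {}" unfolding NC_def CS_def using CSsub CS_def by auto
  have tot: "(\<Sum>S\<in>Pow V. tt (card S) (n - card S) p) = 1" for p
  proof -
    have "(\<Prod>x\<in>V. p + (1 - p)) = (\<Sum>X\<in>Pow V. (\<Prod>x\<in>X. p) * (\<Prod>x\<in>V-X. 1 - p))"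
      by (rule prod_add[OF fin])
    also have "\<dots> = (\<Sum>S\<in>Pow V. tt (card S) (n - card S) p)"
    proof (rule sum.cong[OF refl])
      fix X assume "X \<in> Pow V"
      then have "card (V - X) = n - card X" unfolding n_def
        using fin by (simp add: card_Diff_subset finite_subset)
      then show "(\<Prod>x\<in>X. p) * (\<Prod>x\<in>V-X. 1 - p) = tt (card X) (n - card X) p"
        by (simp add: tt_def)
    qed
    finally show ?thesis by simp
  qed
  have nrel_eq: "nRel V E = (\<lambda>p. 1 - (\<Sum>S\<in>NC. tt (card S) (n - card S) p))"
  proof
    fix p
    have "1 = (\<Sum>S\<in>CS. tt (card S) (n - card S) p) + (\<Sum>S\<in>NC. tt (card S) (n - card S) p)"
      using tot[of p] PowU finP by (simp add: sum.union_disjoint)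
    moreover have "nRel V E p = (\<Sum>S\<in>CS. tt (card S) (n - card S) p)"
      unfolding nRel_def CS_def tt_def n_def by simp
    ultimately show "nRel V E p = 1 - (\<Sum>S\<in>NC. tt (card S) (n - card S) p)" by simp
  qed
  have D1: "deriv (nRel V E) = (\<lambda>p. - (\<Sum>S\<in>NC. d1 (card S) (n - card S) p))"
  proof
    fix p
    have "((\<lambda>p. 1 - (\<Sum>S\<in>NC. tt (card S) (n - card S) p)) has_real_derivative
       0 - (\<Sum>S\<in>NC. d1 (card S) (n - card S) p)) (at p)"
      by (intro DERIV_diff DERIV_const DERIV_sum tt_deriv)
    then show "deriv (nRel V E) p = - (\<Sum>S\<in>NC. d1 (card S) (n - card S) p)"
      unfolding nrel_eq by (simp add: DERIV_imp_deriv)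
  qed
  have D2: "deriv (deriv (nRel V E)) p = - (\<Sum>S\<in>NC. d2 (card S) (n - card S) p)" for p
  proof -
    have "((\<lambda>p. - (\<Sum>S\<in>NC. d1 (card S) (n - card S) p)) has_real_derivative
       - (\<Sum>S\<in>NC. d2 (card S) (n - card S) p)) (at p)"
      by (intro DERIV_minus DERIV_sum d1_deriv)
    then show ?thesis unfolding D1 by (simp add: DERIV_imp_deriv)
  qed
  have b2: "2 \<le> n - card S" if "S \<in> NC" for S
  proof (rule ccontr)
    assume "\<not> 2 \<le> n - card S"
    have SV: "S \<subseteq> V" and nc: "\<not> connected_set V E S" using that NC_def by auto
    have "card (V - S) \<le> 1" using \<open>\<not> 2 \<le> n - card S\<close> SV fin unfolding n_def
      by (simp add: card_Diff_subset finite_subset)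
    then have all: "\<forall>x\<in>V-S. \<forall>y\<in>V-S. x = y"
      using fin by (simp add: card_le_Suc0_iff_eq)
    show False
    proof (cases "S = V")
      case True
      then show False using nc assms(2) unfolding two_connected_def by simp
    next
      case False
      then obtain v where v: "v \<in> V" "v \<notin> S" using SV by auto
      then have "S = V - {v}" using SV all by blast
      then show False using nc assms(2) v unfolding two_connected_def by simp
    qed
  qed
  have NCne: "{} \<in> NC" unfolding NC_def connected_set_def by simp
  show ?thesis
  proof (intro exI[of _ "1 / (3 * real n)"] conjI allI impI)
    show "0 < 1 / (3 * real n)" using n3 by simp
    fix p assume p: "1 - 1 / (3 * real n) < p \<and> p < 1"
    have "1 / (3 * real n) \<le> 1" using n3 by simp
    then have p0: "0 < p" using p by linarith
    have pe: "(1 - p) * (3 * real n) < 1" using p n3 by (simp add: field_simps)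
    have "0 < (\<Sum>S\<in>NC. d2 (card S) (n - card S) p)"
    proof (rule sum_pos2[OF finNC NCne])
      show "0 < d2 (card {}) (n - card {}) p"
        using d2_neg_pos[of "n - card {}" "card {}" n p] b2[OF NCne] p0 p pe by simp
      fix S assume S: "S \<in> NC"
      have "card S \<le> n" using S unfolding NC_def n_def using fin card_mono by auto
      then show "0 \<le> d2 (card S) (n - card S) p"
        using d2_neg_pos[OF b2[OF S] _ p0 _ pe] p by (simp add: less_imp_le)
    qed
    then show "deriv (deriv (nRel V E)) p < 0" unfolding D2 by simp
  qed
qed

end
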